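(* Let $1\le\ell\le k-2$ be integers with $k-\ell$ not dividing $k$. Then $\delta_{k-1}^{\mathrm{frct}}(k,\ell)\le\lambda(k,\ell)$.
   Context: A $k$-graph $G$ has vertex set $V(G)$ and edges that are $k$-subsets. A ($k$-uniform) $\ell$-cycle is a $k$-graph whose vertices can be cyclically ordered so that every edge consists of $k$ cyclically consecutive vertices and consecutive edges intersect in exactly $\ell$ vertices. For $1\le d<k$, $\delta_d(G)$ is the largest $m$ such that every $d$-set lies in at least $m$ edges. A homomorphism $F\to G$ is a vertex map sending edges to edges; a perfect fractional $\ell$-cycle tiling of $G$ is a weighting $\omega(\phi)\in[0,1]$ of homomorphisms $\phi$ from $k$-uniform $\ell$-cycles into $G$ (finitely many nonzero) with $\sum_\phi\omega(\phi)|\phi^{-1}(v)|=1$ for all $v\in V(G)$. The threshold $\delta_d^{\mathrm{frct}}(k,\ell)$ is the infimum of $\delta\in[0,1]$ such that for every $\varepsilon>0$ there is $n_0$ such that every $k$-graph on $n\ge n_0$ vertices with $\delta_d(G)\ge(\delta+\varepsilon)\binom{n-d}{k-d}$ has a perfect fractional $\ell$-cycle tiling. Also $\lambda(k,\ell)=\dfrac{1}{\lceil k/(k-\ell)\rceil(k-\ell)}$. *)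

theory Defs
  imports Complex_Main "HOL-Library.FuncSet"
begin

definition kgraph :: "nat \<Rightarrow> 'a set \<Rightarrow> 'a set set \<Rightarrow> bool" where
  "kgraph k V E \<longleftrightarrow> finite V \<and> (\<forall>e\<in>E. e \<subseteq> V \<and> card e = k)"

definition min_deg :: "nat \<Rightarrow> 'a set \<Rightarrow> 'a set set \<Rightarrow> nat" where
  "min_deg d V E = Min {card {e\<in>E. S \<subseteq> e} | S. S \<subseteq> V \<and> card S = d}"

text \<open>The k-uniform l-cycle with t edges: vertex set {0..<t(k-l)} in cyclic order,
  the i-th edge consists of the k cyclically consecutive vertices starting at i(k-l).\<close>
definition cyc_nverts :: "nat \<Rightarrow> nat \<Rightarrow> nat \<Rightarrow> nat" where
  "cyc_nverts k l t = t * (k - l)"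

definition cyc_edge :: "nat \<Rightarrow> nat \<Rightarrow> nat \<Rightarrow> nat \<Rightarrow> nat set" where
  "cyc_edge k l t i = {(i * (k - l) + j) mod cyc_nverts k l t | j. j < k}"

definition cyc_edges :: "nat \<Rightarrow> nat \<Rightarrow> nat \<Rightarrow> nat set set" where
  "cyc_edges k l t = cyc_edge k l t ` {..<t}"

definition is_cycle :: "nat \<Rightarrow> nat \<Rightarrow> nat \<Rightarrow> bool" where
  "is_cycle k l t \<longleftrightarrow> t \<ge> 1 \<and>
     (\<forall>i<t. card (cyc_edge k l t i) = k \<and>
            card (cyc_edge k l t i \<inter> cyc_edge k l t ((i + 1) mod t)) = l)"

definition cyc_hom :: "nat \<Rightarrow> nat \<Rightarrow> nat \<Rightarrow> 'a set \<Rightarrow> 'a set set \<Rightarrow> (nat \<Rightarrow> 'a) \<Rightarrow> bool" where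
  "cyc_hom k l t V E \<phi> \<longleftrightarrow> is_cycle k l t \<and> \<phi> \<in> {..<cyc_nverts k l t} \<rightarrow>\<^sub>E V \<and>
     (\<forall>e\<in>cyc_edges k l t. \<phi> ` e \<in> E)"

definition perfect_frac_cycle_tiling :: "nat \<Rightarrow> nat \<Rightarrow> 'a set \<Rightarrow> 'a set set \<Rightarrow> bool" where
  "perfect_frac_cycle_tiling k l V E \<longleftrightarrow>
     (\<exists>H :: (nat \<times> (nat \<Rightarrow> 'a)) set. \<exists>\<omega> :: nat \<times> (nat \<Rightarrow> 'a) \<Rightarrow> real.
        finite H \<and> (\<forall>(t, \<phi>)\<in>H. cyc_hom k l t V E \<phi>) \<and>
        (\<forall>h\<in>H. 0 \<le> \<omega> h \<and> \<omega> h \<le> 1) \<and>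
        (\<forall>v\<in>V. (\<Sum>(t, \<phi>)\<in>H. \<omega> (t, \<phi>) * real (card {x\<in>{..<cyc_nverts k l t}. \<phi> x = v})) = 1))"

definition frct_threshold :: "nat \<Rightarrow> nat \<Rightarrow> nat \<Rightarrow> real" where
  "frct_threshold d k l = Inf {\<delta>. 0 \<le> \<delta> \<and> \<delta> \<le> 1 \<and>
     (\<forall>\<epsilon>>0. \<exists>n0. \<forall>n\<ge>n0. \<forall>E :: nat set set.
        kgraph k {..<n} E \<and>
        real (min_deg d {..<n} E) \<ge> (\<delta> + \<epsilon>) * real ((n - d) choose (k - d))
        \<longrightarrow> perfect_frac_cycle_tiling k l {..<n} E)}"

definition lambda_kl :: "nat \<Rightarrow> nat \<Rightarrow> real" where
  "lambda_kl k l = 1 / (real_of_int \<lceil>real k / real (k - l)\<rceil> * real (k - l))"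

end

theory Submission
  imports Defs
begin

definition dotp :: "'a set \<Rightarrow> ('a \<Rightarrow> real) \<Rightarrow> ('a \<Rightarrow> real) \<Rightarrow> real" where
  "dotp V y a = (\<Sum>v\<in>V. y v * a v)"

lemma dotp_left: "dotp V (\<lambda>v. z v - \<mu> * y v) a = dotp V z a - \<mu> * dotp V y a"
  unfolding dotp_def by (simp add: algebra_simps sum_subtractf sum_distrib_left)

lemma dotp_right: "dotp V z (\<lambda>v. a v - \<mu> * a' v) = dotp V z a - \<mu> * dotp V z a'"
  unfolding dotp_def by (simp add: algebra_simps sum_subtractf sum_distrib_left)

lemma farkas:
  assumes "finite V" "finite I"
  shows "(\<exists>c. (\<forall>i\<in>I. 0 \<le> c i) \<and> (\<forall>v\<in>V. b v = (\<Sum>i\<in>I. c i * A i v)))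
      \<or> (\<exists>y. (\<forall>i\<in>I. 0 \<le> dotp V y (A i)) \<and> dotp V y b < 0)"
  using assms(2)
proof (induction I arbitrary: A b rule: finite_induct)
  case empty
  show ?case
  proof (cases "\<forall>v\<in>V. b v = 0")
    case True then show ?thesis by auto
  next
    case False
    then obtain v0 where v0: "v0 \<in> V" "b v0 \<noteq> 0" by auto
    have "b v0 * b v0 \<le> (\<Sum>v\<in>V. b v * b v)"
      by (rule member_le_sum) (use v0 assms(1) in auto)
    moreover have "b v0 * b v0 > 0" using v0 by (auto simp: zero_less_mult_iff linorder_neq_iff)
    ultimately have "dotp V (\<lambda>v. - b v) b < 0"
      unfolding dotp_def by (simp add: sum_negf)
    then show ?thesis by auto
  qed
next
  case (insert j I)
  from insert.IH[of b A] show ?case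
  proof
    assume "\<exists>c. (\<forall>i\<in>I. 0 \<le> c i) \<and> (\<forall>v\<in>V. b v = (\<Sum>i\<in>I. c i * A i v))"
    then obtain c where c: "\<forall>i\<in>I. 0 \<le> c i" "\<forall>v\<in>V. b v = (\<Sum>i\<in>I. c i * A i v)" by blast
    define c' where "c' = c(j := 0)"
    have "\<forall>i\<in>insert j I. 0 \<le> c' i" using c by (auto simp: c'_def)
    moreover have "\<forall>v\<in>V. b v = (\<Sum>i\<in>insert j I. c' i * A i v)"
    proof
      fix v assume "v \<in> V"
      have "(\<Sum>i\<in>insert j I. c' i * A i v) = (\<Sum>i\<in>I. c' i * A i v)"
        using insert.hyps by (simp add: c'_def)
      also have "\<dots> = (\<Sum>i\<in>I. c i * A i v)"
        using insert.hyps by (intro sum.cong) (auto simp: c'_def)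
      finally show "b v = (\<Sum>i\<in>insert j I. c' i * A i v)" using c \<open>v \<in> V\<close> by simp
    qed
    ultimately show ?thesis by blast
  next
    assume "\<exists>y. (\<forall>i\<in>I. 0 \<le> dotp V y (A i)) \<and> dotp V y b < 0"
    then obtain y where y: "\<forall>i\<in>I. 0 \<le> dotp V y (A i)" "dotp V y b < 0" by blast
    show ?thesis
    proof (cases "0 \<le> dotp V y (A j)")
      case True then show ?thesis using y by auto
    next
      case False
      define d where "d = dotp V y (A j)"
      have d: "d < 0" using False d_def by simp
      define A' where "A' i = (\<lambda>v. A i v - (dotp V y (A i) / d) * A j v)" for i
      define b' where "b' = (\<lambda>v. b v - (dotp V y b / d) * A j v)"
      from insert.IH[of b' A'] show ?thesis
      proof
        assume "\<exists>c. (\<forall>i\<in>I. 0 \<le> c i) \<and> (\<forall>v\<in>V. b' v = (\<Sum>i\<in>I. c i * A' i v))"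
        then obtain c where c: "\<forall>i\<in>I. 0 \<le> c i" "\<forall>v\<in>V. b' v = (\<Sum>i\<in>I. c i * A' i v)" by blast
        define cj where "cj = (dotp V y b - (\<Sum>i\<in>I. c i * dotp V y (A i))) / d"
        define c' where "c' = c(j := cj)"
        have "(\<Sum>i\<in>I. c i * dotp V y (A i)) \<ge> 0"
          using c y by (intro sum_nonneg) auto
        hence "cj \<ge> 0" unfolding cj_def using y d
          by (intro divide_nonpos_neg) auto
        hence "\<forall>i\<in>insert j I. 0 \<le> c' i" using c by (auto simp: c'_def)
        moreover have "\<forall>v\<in>V. b v = (\<Sum>i\<in>insert j I. c' i * A i v)"
        proof
          fix v assume v: "v \<in> V"
          have "(\<Sum>i\<in>insert j I. c' i * A i v) = cj * A j v + (\<Sum>i\<in>I. c' i * A i v)"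
            using insert.hyps by (simp add: c'_def)
          also have "(\<Sum>i\<in>I. c' i * A i v) = (\<Sum>i\<in>I. c i * A i v)"
            using insert.hyps by (intro sum.cong) (auto simp: c'_def)
          finally have e1: "(\<Sum>i\<in>insert j I. c' i * A i v) = cj * A j v + (\<Sum>i\<in>I. c i * A i v)" .
          have "b' v = (\<Sum>i\<in>I. c i * A i v) - (\<Sum>i\<in>I. c i * dotp V y (A i)) / d * A j v"
            using c v unfolding A'_def
            by (simp add: algebra_simps sum_subtractf sum_distrib_left sum_distrib_right sum_divide_distrib)
          then show "b v = (\<Sum>i\<in>insert j I. c' i * A i v)"
            unfolding e1 b'_def cj_def using d by (simp add: field_simps)
        qed
        ultimately show ?thesis by blast
      next
        assume "\<exists>z. (\<forall>i\<in>I. 0 \<le> dotp V z (A' i)) \<and> dotp V z b' < 0"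
        then obtain z where z: "\<forall>i\<in>I. 0 \<le> dotp V z (A' i)" "dotp V z b' < 0" by blast
        define w where "w = (\<lambda>v. z v - (dotp V z (A j) / d) * y v)"
        have "\<forall>i\<in>insert j I. 0 \<le> dotp V w (A i)"
        proof
          fix i assume "i \<in> insert j I"
          then consider "i = j" | "i \<in> I" by auto
          then show "0 \<le> dotp V w (A i)"
          proof cases
            case 1 then show ?thesis unfolding w_def dotp_left using d d_def by simp
          next
            case 2
            have "dotp V w (A i) = dotp V z (A' i)"
              unfolding w_def A'_def dotp_left dotp_right d_def by simp
            then show ?thesis using z 2 by simp
          qed
        qed
        moreover have "dotp V w b = dotp V z b'"
          unfolding w_def b'_def dotp_left dotp_right d_def by simp
        ultimately show ?thesis using z by auto
      qed
    qed
  qed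
qed

lemma modinj0: "(A + j) mod N = (A + j') mod (N::nat) \<Longrightarrow> j' < N \<Longrightarrow> j \<le> j' \<Longrightarrow> j = j'"
proof -
  assume a: "(A + j) mod N = (A + j') mod (N::nat)" "j' < N" "j \<le> j'"
  have "N dvd (A + j') - (A + j)" using a mod_eq_dvd_iff_nat[of "A+j" "A+j'" N] by simp
  then have d: "N dvd j' - j" by simp
  show "j = j'"
  proof (rule ccontr)
    assume "j \<noteq> j'"
    then have "0 < j' - j" using a by simp
    then have "N \<le> j' - j" using d by (rule dvd_imp_le[rotated])
    then show False using a by simp
  qed
qed
lemma modinj: "j = j'" if "(A + j) mod N = (A + j') mod (N::nat)" "j < N" "j' < N"
proof (cases "j \<le> j'")
  case True then show ?thesis using that modinj0 by blast
next
  case False then show ?thesis using that modinj0[of A j' N j] by simp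
qed

lemma mod_add_inj:
  fixes A N :: nat
  shows "inj_on (\<lambda>j. (A + j) mod N) {..<N}"
proof (rule inj_onI)
  fix x y assume "x \<in> {..<N}" "y \<in> {..<N}" "(A+x) mod N = (A+y) mod N"
  then show "x = y" by (intro modinj[of A x N y]) auto
qed

lemma cyc_edge_img: "cyc_edge k l t i = (\<lambda>j. (i*(k-l) + j) mod cyc_nverts k l t) ` {..<k}"
  by (auto simp: cyc_edge_def)

lemma modmult_shift:
  fixes x t m j :: nat
  shows "((x mod t) * m + j) mod (t*m) = (x*m + j) mod (t*m)"
proof -
  have "(x*m + j) mod (t*m) = ((x*m) mod (t*m) + j) mod (t*m)" by (rule mod_add_left_eq[symmetric])
  also have "\<dots> = ((x mod t)*m + j) mod (t*m)" by (simp only: mod_mult_mult2)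
  finally show ?thesis by simp
qed

lemma is_cycle_I:
  fixes k l t :: nat
  assumes "1 \<le> l" "l + 2 \<le> k" "k + (k - l) \<le> t * (k - l)"
  shows "is_cycle k l t"
proof -
  define m where "m = k - l"
  define N where "N = cyc_nverts k l t"
  have N: "N = t * m" by (simp add: N_def m_def cyc_nverts_def)
  have t1: "t \<ge> 1" using assms by (cases t) auto
  have kN: "k + m \<le> N" using assms N m_def by simp
  { fix i assume "i < t"
    define F where "F = (\<lambda>j. (i*m + j) mod N)"
    have inj: "inj_on F {..<N}" unfolding F_def by (rule mod_add_inj)
    have E1: "cyc_edge k l t i = F ` {..<k}"
      unfolding cyc_edge_img F_def N_def m_def ..
    have "cyc_edge k l t ((i + 1) mod t) = (\<lambda>j. (((i+1) mod t) * m + j) mod N) ` {..<k}"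
      unfolding cyc_edge_img N_def m_def ..
    also have "\<dots> = (\<lambda>j. ((i+1) * m + j) mod N) ` {..<k}"
      unfolding N by (rule image_cong[OF refl]) (rule modmult_shift)
    also have "\<dots> = F ` ((\<lambda>j. j + m) ` {0..<k})"
      unfolding F_def image_image by (simp add: algebra_simps lessThan_atLeast0)
    also have "(\<lambda>j. j + m) ` {0..<k} = {m..<m+k}" by (simp add: add.commute)
    finally have E2: "cyc_edge k l t ((i + 1) mod t) = F ` {m..<m+k}" .
    have c1: "card (cyc_edge k l t i) = k"
      unfolding E1 using kN by (subst card_image) (auto intro: inj_on_subset[OF inj])
    have "cyc_edge k l t i \<inter> cyc_edge k l t ((i + 1) mod t) = F ` ({..<k} \<inter> {m..<m+k})"
      unfolding E1 E2 using kN by (intro inj_on_image_Int[OF inj, symmetric]) auto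
    also have "{..<k} \<inter> {m..<m+k} = {m..<k}" by auto
    finally have e3: "cyc_edge k l t i \<inter> cyc_edge k l t ((i + 1) mod t) = F ` {m..<k}" .
    have "inj_on F {m..<k}" by (rule inj_on_subset[OF inj]) (use kN in auto)
    then have "card (cyc_edge k l t i \<inter> cyc_edge k l t ((i + 1) mod t)) = k - m"
      unfolding e3 by (simp add: card_image)
    then have "card (cyc_edge k l t i \<inter> cyc_edge k l t ((i + 1) mod t)) = l"
      using assms m_def by simp
    note c1 this }
  then show ?thesis unfolding is_cycle_def using t1 by auto
qed

lemma win_special_ex:
  fixes a m k i :: nat
  assumes "(a-1)*m < k" "0 < a"
  shows "\<exists>c. i*m \<le> a*m*c \<and> a*m*c < i*m + k"
proof -
  define c where "c = (i + a - 1) div a"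
  have "c * a \<le> i + a - 1" unfolding c_def by (rule div_times_less_eq_dividend)
  moreover have "i + a - 1 < c * a + a" unfolding c_def using assms(2)
    by (metis add.commute div_mult_mod_eq mod_less_divisor nat_add_left_cancel_less)
  ultimately have c1: "i \<le> c * a" "c * a \<le> i + (a - 1)" using assms(2) by auto
  have e: "a*m*c = (c*a)*m" by (simp add: mult_ac)
  have h1: "i*m \<le> (c*a)*m" using c1 by simp
  have h2: "(c*a)*m \<le> (i + (a-1))*m" using c1 by (intro mult_le_mono1)
  have h3: "(i + (a-1))*m = i*m + (a-1)*m" by (simp add: algebra_simps)
  show ?thesis using e h1 h2 h3 assms(1) by (intro exI[of _ c]) linarith
qed

lemma win_special_uniq:
  fixes K z z' A k :: nat
  assumes "k < K" "K dvd z" "K dvd z'" "A \<le> z" "z < A + k" "A \<le> z'" "z' < A + k"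
  shows "z = z'"
proof (rule ccontr)
  assume ne: "z \<noteq> z'"
  { fix x y :: nat assume "K dvd x" "K dvd y" "A \<le> x" "y < A + k" "x < y"
    then have "K dvd y - x" by (simp add: dvd_diff_nat)
    then have "K \<le> y - x" using \<open>x < y\<close> by (intro dvd_imp_le) auto
    then have False using \<open>A \<le> x\<close> \<open>y < A + k\<close> \<open>k < K\<close> by simp }
  note * = this
  show False
  proof (cases "z < z'")
    case True then show ?thesis using * assms by blast
  next
    case False then have "z' < z" using ne by simp
    then show ?thesis using * assms by blast
  qed
qed

lemma w_diff:
  fixes K z z' A k s0 s :: nat
  assumes kK: "k < K" and k3: "3 \<le> k"
    and s0: "K dvd s0" "A \<le> s0" "s0 < A + k"
    and z: "\<not> K dvd z" "A \<le> z" "z < z'" "z' < A + k" "\<not> K dvd z'"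
  shows "((z - z div K) + s) mod (k-1) \<noteq> ((z' - z' div K) + s) mod (k-1)"
proof
  assume eq: "((z - z div K) + s) mod (k-1) = ((z' - z' div K) + s) mod (k-1)"
  have K0: "0 < K" using kK by simp
  have d1: "z div K \<le> z' div K" using z by (intro div_le_mono) simp
  have "z' div K \<le> (z + K) div K" using z kK by (intro div_le_mono) simp
  then have d2: "z' div K \<le> z div K + 1" using K0 by simp
  have zd: "z div K \<le> z" "z' div K \<le> z'" by auto
  have bnd: "1 \<le> (z' - z) - (z' div K - z div K) \<and> (z' - z) - (z' div K - z div K) \<le> k - 2"
  proof (cases "z' div K = z div K")
    case True
    obtain c where c: "s0 = K * c" using s0 by blast
    have "\<not> (z < s0 \<and> s0 \<le> z')"
    proof
      assume h: "z < s0 \<and> s0 \<le> z'"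
      then have "z div K < c" using c by (simp add: less_mult_imp_div_less mult.commute)
      moreover have "s0 div K \<le> z' div K" using h by (intro div_le_mono) simp
      ultimately show False using True c K0 by simp
    qed
    moreover have "s0 \<noteq> z" "s0 \<noteq> z'" using s0 z by auto
    ultimately have "s0 < z \<or> z' < s0" by auto
    then have "z' - z \<le> k - 2" using s0 z by auto
    then show ?thesis using True z by simp
  next
    case False
    then have dd: "z' div K = z div K + 1" using d1 d2 by simp
    define c where "c = z' div K"
    have "K * c \<le> z'" unfolding c_def by (simp add: div_times_less_eq_dividend mult.commute)
    moreover have "K * c \<noteq> z'" using z by auto
    moreover have "z < K * c"
    proof -
      have "z < K * (z div K) + K" using K0
        by (metis div_mult_mod_eq mod_less_divisor mult.commute nat_add_left_cancel_less)
      then show ?thesis using dd c_def by (simp add: algebra_simps)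
    qed
    ultimately have "2 \<le> z' - z" by simp
    then show ?thesis using dd z by arith
  qed
  define p where "p = (z - z div K) + s"
  define p' where "p' = (z' - z' div K) + s"
  have "p \<le> p'" "p' - p = (z' - z) - (z' div K - z div K)"
    unfolding p_def p'_def using d1 d2 zd z by arith+
  moreover have "(k-1) dvd p' - p" using eq mod_eq_dvd_iff_nat[of p p' "k-1"] \<open>p \<le> p'\<close>
    unfolding p_def p'_def by simp
  ultimately have "k - 1 \<le> p' - p" using bnd by (intro dvd_imp_le) auto
  then show False using bnd \<open>p' - p = _\<close> k3 by arith
qed

lemma W_period:
  fixes K n N z s :: nat
  assumes "N = K * n" "0 < K"
  shows "((z mod N) - (z mod N) div K + s) mod n = (z - z div K + s) mod n"
proof -
  define q where "q = z div N"
  define r where "r = z mod N"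
  have z: "z = q * N + r" unfolding q_def r_def by simp
  have "z div K = r div K + q * n"
    unfolding z assms(1) using assms(2)
    by (metis add.commute div_mult_self1 mult.assoc mult.commute not_gr0)
  moreover have "q * N = q * n * (K - 1) + q * n" using assms
    by (simp add: algebra_simps)
  moreover have "r div K \<le> r" by simp
  moreover have "q * (K - 1) * n = q * n * (K - 1)" by (simp add: mult_ac)
  ultimately have "z - z div K + s = (r - r div K + s) + (q * (K - 1)) * n"
    using z by arith
  then show ?thesis unfolding r_def by simp
qed

definition Phi :: "nat \<Rightarrow> nat \<Rightarrow> 'a \<Rightarrow> (nat \<Rightarrow> 'a) \<Rightarrow> nat \<Rightarrow> nat \<Rightarrow> 'a" where
  "Phi K n u g s z = (if K dvd z then u else g ((z - z div K + s) mod n))"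

lemma hom_ok:
  assumes kl: "1 \<le> l" "l + 2 \<le> k" and a: "(a-1)*(k-l) < k" "k < a*(k-l)"
    and kg: "kgraph k V E" and e: "insert u S0 \<in> E" "u \<notin> S0" "card S0 = k - 1"
    and g: "bij_betw g {..<k-1} S0"
  shows "cyc_hom k l (a*(k-1)) V E
           (\<lambda>x. if x < a*(k-l)*(k-1) then Phi (a*(k-l)) (k-1) u g s x else undefined)"
proof -
  define m where "m = k - l"
  define K where "K = a*m"
  define N where "N = K*(k-1)"
  define t0 where "t0 = a*(k-1)"
  define P where "P = Phi K (k-1) u g s"
  define \<phi> where "\<phi> = (\<lambda>x. if x < N then P x else undefined)"
  have k3: "3 \<le> k" using kl by simp
  have m2: "2 \<le> m" "m \<le> k" using kl m_def by auto
  have kK: "k < K" using a K_def m_def by simp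
  have a0: "0 < a" using kK K_def by (cases a) auto
  have am: "(a-1)*m < k" using a m_def by simp
  have cycN: "cyc_nverts k l t0 = N" by (simp add: cyc_nverts_def t0_def N_def K_def m_def mult_ac)
  have N0: "0 < N" unfolding N_def using kK k3 by simp
  have h4: "4*(k-1) \<le> K*(k-1)" using kK k3 by (intro mult_le_mono1) simp
  have "k + m \<le> 4*(k-1)" using m2 k3 by simp
  then have NK: "k + m \<le> N" unfolding N_def using h4 by (rule le_trans)
  have cyc: "is_cycle k l t0"
    by (rule is_cycle_I) (use kl NK cycN m_def in \<open>auto simp: cyc_nverts_def\<close>)
  have finS: "finite S0" using e k3 by (intro card_ge_0_finite) simp
  have gS: "g c \<in> S0" if "c < k-1" for c using bij_betw_apply[OF g] that by simp
  have ginj: "inj_on g {..<k-1}" using g by (rule bij_betw_imp_inj_on)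
  have PS: "P z \<in> insert u S0" for z
    unfolding P_def Phi_def using gS k3 by simp
  have Vsub: "insert u S0 \<subseteq> V" using kg e unfolding kgraph_def by blast
  have KN: "K dvd N" unfolding N_def by simp
  have per: "P (z mod N) = P z" for z
    unfolding P_def Phi_def using dvd_mod_iff[OF KN, of z] W_period[OF N_def, of z s] kK
    by simp
  have img: "\<phi> ` cyc_edge k l t0 i = insert u S0" for i
  proof -
    have "cyc_edge k l t0 i = (\<lambda>j. (i*m + j) mod N) ` {..<k}"
      using cyc_edge_img[of k l t0 i] cycN m_def by simp
    then have "\<phi> ` cyc_edge k l t0 i = (\<lambda>j. \<phi> ((i*m + j) mod N)) ` {..<k}"
      by (simp add: image_image)
    also have "\<dots> = (\<lambda>j. P (i*m + j)) ` {..<k}"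
    proof (rule image_cong[OF refl])
      fix j show "\<phi> ((i*m + j) mod N) = P (i*m + j)"
        unfolding \<phi>_def using N0 per by simp
    qed
    also have "\<dots> = (\<lambda>j. P (i*m + j)) ` {0..<k}" by (simp add: lessThan_atLeast0)
    also have "\<dots> = P ` ((\<lambda>j. j + i*m) ` {0..<k})"
      unfolding image_image by (simp add: add.commute)
    also have "(\<lambda>j. j + i*m) ` {0..<k} = {i*m..<i*m+k}" by (simp add: add.commute)
    finally have eq: "\<phi> ` cyc_edge k l t0 i = P ` {i*m..<i*m+k}" .
    obtain c where c: "i*m \<le> a*m*c" "a*m*c < i*m + k"
      using win_special_ex[OF am a0] by blast
    have inj: "inj_on P {i*m..<i*m+k}"
    proof (rule inj_onI)
      fix z z' assume zz: "z \<in> {i*m..<i*m+k}" "z' \<in> {i*m..<i*m+k}" and pe: "P z = P z'"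
      show "z = z'"
      proof (cases "K dvd z")
        case True
        show ?thesis
        proof (cases "K dvd z'")
          case True
          have "i*m \<le> z" "z < i*m+k" "i*m \<le> z'" "z' < i*m+k" using zz by auto
          then show ?thesis using win_special_uniq[OF kK \<open>K dvd z\<close> True] by blast
        next
          case False
          then have "P z' \<in> S0" unfolding P_def Phi_def using gS k3 by simp
          moreover have "P z = u" unfolding P_def Phi_def using \<open>K dvd z\<close> by simp
          ultimately show ?thesis using pe e by simp
        qed
      next
        case False
        show ?thesis
        proof (cases "K dvd z'")
          case True
          then have "P z' = u" unfolding P_def Phi_def by simp
          moreover have "P z \<in> S0" unfolding P_def Phi_def using gS k3 False by simp
          ultimately show ?thesis using pe e by simp
        next
          case F2: False
          have s0: "K dvd a*m*c" "i*m \<le> a*m*c" "a*m*c < i*m + k" using c K_def by auto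
          have diff: "(z - z div K + s) mod (k-1) \<noteq> (z' - z' div K + s) mod (k-1)"
            if "z < z'" "z \<in> {i*m..<i*m+k}" "z' \<in> {i*m..<i*m+k}" "\<not> K dvd z" "\<not> K dvd z'" for z z'
            using w_diff[OF kK k3 s0, of z z' s] that by auto
          show ?thesis
          proof (rule ccontr)
            assume ne: "z \<noteq> z'"
            have "(z - z div K + s) mod (k-1) \<noteq> (z' - z' div K + s) mod (k-1)"
            proof (cases "z < z'")
              case True then show ?thesis using diff zz False F2 by blast
            next
              case nl: False
              then have "z' < z" using ne by simp
              then show ?thesis using diff[of z' z] zz False F2 by metis
            qed
            moreover have "g ((z - z div K + s) mod (k-1)) = g ((z' - z' div K + s) mod (k-1))"
              using pe False F2 unfolding P_def Phi_def by simp
            ultimately show False using ginj k3 unfolding inj_on_def by simp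
          qed
        qed
      qed
    qed
    have "P ` {i*m..<i*m+k} \<subseteq> insert u S0" using PS by auto
    moreover have "card (P ` {i*m..<i*m+k}) = card (insert u S0)"
      using card_image[OF inj] finS e k3 by simp
    ultimately have "P ` {i*m..<i*m+k} = insert u S0"
      using finS by (intro card_subset_eq) auto
    then show ?thesis using eq by simp
  qed
  have PV: "P z \<in> V" for z using PS Vsub by blast
  have "\<phi> \<in> {..<cyc_nverts k l t0} \<rightarrow>\<^sub>E V"
    unfolding cycN \<phi>_def using PV by (auto simp: PiE_def extensional_def)
  moreover have "\<forall>e\<in>cyc_edges k l t0. \<phi> ` e \<in> E"
    unfolding cyc_edges_def using img e by auto
  ultimately have "cyc_hom k l t0 V E \<phi>" unfolding cyc_hom_def using cyc by blast
  moreover have "\<phi> = (\<lambda>x. if x < a*(k-l)*(k-1) then Phi (a*(k-l)) (k-1) u g s x else undefined)"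
    unfolding \<phi>_def P_def N_def K_def m_def ..
  ultimately show ?thesis unfolding t0_def by simp
qed

lemma shift_sum:
  fixes n b :: nat
  shows "(\<Sum>s<n. f ((b + s) mod n)) = (\<Sum>s<n. f s)"
proof (cases "n = 0")
  case True then show ?thesis by simp
next
  case False
  have inj: "inj_on (\<lambda>s. (b + s) mod n) {..<n}" by (rule mod_add_inj)
  have sub: "(\<lambda>s. (b + s) mod n) ` {..<n} \<subseteq> {..<n}" using False by auto
  have "(\<lambda>s. (b + s) mod n) ` {..<n} = {..<n}" by (rule endo_inj_surj[OF _ sub inj]) simp
  then have "bij_betw (\<lambda>s. (b + s) mod n) {..<n} {..<n}" using inj by (simp add: bij_betw_def)
  then show ?thesis by (rule sum.reindex_bij_betw)
qed

lemma special_card: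
  fixes K n :: nat
  assumes "0 < K"
  shows "card {x\<in>{..<K*n}. K dvd x} = n"
proof -
  have "{x\<in>{..<K*n}. K dvd x} = (\<lambda>c. K*c) ` {..<n}"
  proof
    show "{x\<in>{..<K*n}. K dvd x} \<subseteq> (\<lambda>c. K*c) ` {..<n}"
    proof
      fix x assume "x \<in> {x\<in>{..<K*n}. K dvd x}"
      then obtain c where "x = K*c" "K*c < K*n" by auto
      then show "x \<in> (\<lambda>c. K*c) ` {..<n}" using assms by auto
    qed
  qed (use assms in auto)
  moreover have "inj_on (\<lambda>c. K*c) {..<n}" using assms by (auto simp: inj_on_def)
  ultimately show ?thesis by (simp add: card_image)
qed

lemma dual_sum:
  fixes y :: "'a \<Rightarrow> real" and K n :: nat
  assumes K: "0 < K" and g: "bij_betw g {..<n} S0"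
  shows "(\<Sum>s<n. \<Sum>x<K*n. y (Phi K n u g s x))
         = real n * real n * y u + real (K*n - n) * (\<Sum>v\<in>S0. y v)"
proof -
  have inner: "(\<Sum>s<n. y (Phi K n u g s x)) = (if K dvd x then real n * y u else (\<Sum>v\<in>S0. y v))" for x
  proof (cases "K dvd x")
    case True then show ?thesis by (simp add: Phi_def)
  next
    case False
    have "(\<Sum>s<n. y (Phi K n u g s x)) = (\<Sum>s<n. (y \<circ> g) ((x - x div K + s) mod n))"
      using False by (simp add: Phi_def)
    also have "\<dots> = (\<Sum>s<n. (y \<circ> g) s)" by (rule shift_sum)
    also have "\<dots> = (\<Sum>v\<in>S0. y v)" using sum.reindex_bij_betw[OF g, of y] by simp
    finally show ?thesis using False by simp
  qed
  have "(\<Sum>s<n. \<Sum>x<K*n. y (Phi K n u g s x)) = (\<Sum>x<K*n. \<Sum>s<n. y (Phi K n u g s x))"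
    by (rule sum.swap)
  also have "\<dots> = (\<Sum>x<K*n. (if K dvd x then real n * y u else (\<Sum>v\<in>S0. y v)))"
    using inner by simp
  also have "\<dots> = real (card ({..<K*n} \<inter> {x. K dvd x})) * (real n * y u)
      + real (card ({..<K*n} \<inter> - {x. K dvd x})) * (\<Sum>v\<in>S0. y v)"
    by (simp add: sum.If_cases)
  also have "card ({..<K*n} \<inter> {x. K dvd x}) = n"
    using special_card[OF K, of n] by (simp add: Int_def conj_commute)
  also have "card ({..<K*n} \<inter> - {x. K dvd x}) = K*n - n"
  proof -
    have u: "({..<K*n} \<inter> {x. K dvd x}) \<union> ({..<K*n} \<inter> - {x. K dvd x}) = {..<K*n}" by blast
    have "card ({..<K*n} \<inter> {x. K dvd x}) + card ({..<K*n} \<inter> - {x. K dvd x})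
        = card (({..<K*n} \<inter> {x. K dvd x}) \<union> ({..<K*n} \<inter> - {x. K dvd x}))"
      by (rule card_Un_disjoint[symmetric]) auto
    then have "card ({..<K*n} \<inter> {x. K dvd x}) + card ({..<K*n} \<inter> - {x. K dvd x}) = card {..<K*n}"
      unfolding u .
    then show ?thesis using \<open>card ({..<K*n} \<inter> {x. K dvd x}) = n\<close> by simp
  qed
  finally show ?thesis by (simp add: mult_ac)
qed

lemma top_subset:
  fixes f :: "'a \<Rightarrow> real"
  assumes X: "finite X" and j: "j \<le> card X"
  shows "\<exists>T\<subseteq>X. card T = j \<and> (\<forall>x\<in>T. \<forall>z\<in>X-T. f z \<le> f x)"
proof -
  define F where "F = {T. T \<subseteq> X \<and> card T = j}"
  have "F \<subseteq> Pow X" unfolding F_def by auto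
  then have finF: "finite F" by (rule finite_subset) (simp add: X)
  obtain T0 where "T0 \<subseteq> X" "card T0 = j" using obtain_subset_with_card_n[OF j] by metis
  then have neF: "F \<noteq> {}" unfolding F_def by auto
  define M where "M = Max (sum f ` F)"
  have "M \<in> sum f ` F" unfolding M_def using finF neF by (intro Max_in) auto
  then obtain T where T: "T \<in> F" "sum f T = M" by auto
  have maxT: "sum f T' \<le> sum f T" if "T' \<in> F" for T'
    unfolding T(2) M_def using finF that by (intro Max_ge) auto
  have TX: "T \<subseteq> X" "card T = j" using T unfolding F_def by auto
  have finT: "finite T" using TX X finite_subset by auto
  have "\<forall>x\<in>T. \<forall>z\<in>X-T. f z \<le> f x"
  proof (intro ballI, rule ccontr)
    fix x z assume x: "x \<in> T" and z: "z \<in> X - T" and lt: "\<not> f z \<le> f x"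
    define T' where "T' = insert z (T - {x})"
    have "T' \<subseteq> X" using TX z unfolding T'_def by auto
    moreover have "card T' = j" unfolding T'_def using finT x z TX
      by (simp add: card_insert_disjoint) (metis One_nat_def Suc_pred card_gt_0_iff empty_iff)
    ultimately have "T' \<in> F" unfolding F_def by auto
    moreover have "sum f T' = f z + (sum f T - f x)"
      unfolding T'_def using finT x z by (simp add: sum_diff1)
    ultimately show False using maxT lt by force
  qed
  then show ?thesis using TX by blast
qed

lemma fiber_sum:
  fixes y :: "'a \<Rightarrow> real"
  assumes "finite V" "finite X" "\<phi> ` X \<subseteq> V"
  shows "(\<Sum>v\<in>V. y v * real (card {x\<in>X. \<phi> x = v})) = (\<Sum>x\<in>X. y (\<phi> x))"
proof -
  have "(\<Sum>x\<in>X. y (\<phi> x)) = (\<Sum>v\<in>V. \<Sum>x\<in>{x\<in>X. \<phi> x = v}. y (\<phi> x))"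
    using sum.group[OF assms(2,1,3), of "\<lambda>x. y (\<phi> x)"] by simp
  also have "\<dots> = (\<Sum>v\<in>V. \<Sum>x\<in>{x\<in>X. \<phi> x = v}. y v)"
    by (intro sum.cong) auto
  finally show ?thesis by (simp add: mult.commute)
qed

lemma final_arith:
  fixes kap K b tau ST SR sig yu S :: real
  assumes "S < 0" "S = ST + SR + sig" "ST \<ge> tau * yu" "kap * SR \<ge> (b - kap) * sig"
    "kap * yu \<ge> sig" "kap * yu + (K - 1) * sig \<ge> 0" "(K - 1) * tau \<ge> b"
    "kap > 0" "K > 1" "tau \<ge> 0" "b \<ge> 0"
  shows False
proof (cases "yu \<ge> 0")
  case True
  have "(K-1) * (b * sig) \<ge> - (kap * yu) * b"
    using mult_right_mono[OF assms(6)[unfolded add.commute[of "kap*yu"]] , of b] assms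
    by (smt (verit, ccfv_threshold) mult.commute mult.left_commute mult_minus_left ring_class.ring_distribs(2))
  moreover have "(kap * yu) * b \<le> (kap * yu) * ((K-1) * tau)"
    using True assms by (intro mult_left_mono) auto
  ultimately have "(K-1) * (b * sig) \<ge> (K-1) * (- (kap * yu * tau))" by (simp add: algebra_simps)
  then have "(K-1) * (- (kap * yu * tau)) \<le> (K-1) * (b * sig)" by simp
  then have "b * sig \<ge> - (kap * yu * tau)" using assms by (subst (asm) mult_le_cancel_left_pos) auto
  moreover have "kap * (tau * yu) \<le> kap * ST" using assms by (intro mult_left_mono) auto
  moreover have "kap * (tau * yu) = kap * yu * tau" by (simp add: mult_ac)
  moreover have "(b - kap) * sig = b * sig - kap * sig" by (simp add: algebra_simps)
  moreover have "kap * S = kap * ST + kap * SR + kap * sig" using assms(2) by (simp add: algebra_simps)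
  ultimately have "kap * S \<ge> 0" using assms(4) by linarith
  then show False using assms by (simp add: mult_less_0_iff zero_le_mult_iff)
next
  case False
  then have "sig < 0" using assms by (smt (verit) mult_pos_neg)
  moreover have "(K - 1) * sig > 0" using False assms by (smt (verit) mult_pos_neg)
  ultimately show False using assms by (smt (verit) mult_pos_neg)
qed

lemma tiling_exists:
  fixes E :: "nat set set" and n Tn k l a :: nat
  assumes kl: "1 \<le> l" "l + 2 \<le> k" and a: "(a-1)*(k-l) < k" "k < a*(k-l)"
    and kg: "kgraph k {..<n} E"
    and T1: "n \<le> a*(k-l)*Tn" and T2: "Tn + (k-1) \<le> n"
    and cod: "\<And>S. S \<subseteq> {..<n} \<Longrightarrow> card S = k-1 \<Longrightarrow> Tn < card {e\<in>E. S \<subseteq> e}"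
  shows "perfect_frac_cycle_tiling k l {..<n} E"
proof -
  define V where "V = {..<n}"
  define m where "m = k - l"
  define K where "K = a*m"
  define t0 where "t0 = a*(k-1)"
  define N where "N = K*(k-1)"
  have k3: "3 \<le> k" using kl by simp
  have kK: "k < K" using a K_def m_def by simp
  have K0: "0 < K" using kK by simp
  have finV: "finite V" unfolding V_def by simp
  have cycN: "cyc_nverts k l t0 = N" by (simp add: cyc_nverts_def t0_def N_def K_def m_def mult_ac)
  have N0: "0 < N" unfolding N_def using kK k3 by simp
  define H0 where "H0 = {\<phi>. cyc_hom k l t0 V E \<phi>}"
  have H0sub: "H0 \<subseteq> {..<N} \<rightarrow>\<^sub>E V" unfolding H0_def cyc_hom_def cycN by auto
  have finH0: "finite H0" by (rule finite_subset[OF H0sub], rule finite_PiE) (use finV in auto)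
  define A where "A \<phi> v = real (card {x\<in>{..<N}. \<phi> x = v})" for \<phi> :: "nat \<Rightarrow> nat" and v
  have dotA: "dotp V y (A \<phi>) = (\<Sum>x<N. y (\<phi> x))" if "\<phi> \<in> H0" for y \<phi>
  proof -
    have "\<phi> ` {..<N} \<subseteq> V" using that H0sub by (auto simp: PiE_def Pi_def)
    then show ?thesis unfolding dotp_def A_def using fiber_sum[OF finV, of "{..<N}" \<phi> y] by simp
  qed
  from farkas[OF finV finH0, of "\<lambda>_. 1" A] show ?thesis
  proof
    assume "\<exists>c. (\<forall>i\<in>H0. 0 \<le> c i) \<and> (\<forall>v\<in>V. 1 = (\<Sum>i\<in>H0. c i * A i v))"
    then obtain c where c: "\<forall>i\<in>H0. 0 \<le> c i" "\<forall>v\<in>V. 1 = (\<Sum>i\<in>H0. c i * A i v)" by blast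
    define H where "H = (\<lambda>\<phi>. (t0, \<phi>)) ` H0"
    define \<omega> where "\<omega> = (\<lambda>(t::nat, \<phi>::nat \<Rightarrow> nat). c \<phi>)"
    have A0: "A \<phi> v \<ge> 0" for \<phi> v unfolding A_def by simp
    have c1: "c \<phi> \<le> 1" if "\<phi> \<in> H0" for \<phi>
    proof -
      have v0: "\<phi> 0 \<in> V" using that H0sub N0 by (auto simp: PiE_def Pi_def)
      have "1 \<le> A \<phi> (\<phi> 0)" unfolding A_def using N0
        by (simp add: Suc_le_eq card_gt_0_iff) (use N0 in auto)
      then have "c \<phi> * 1 \<le> c \<phi> * A \<phi> (\<phi> 0)" using c that by (intro mult_left_mono) auto
      then have "c \<phi> \<le> c \<phi> * A \<phi> (\<phi> 0)" by simp
      also have "\<dots> \<le> (\<Sum>i\<in>H0. c i * A i (\<phi> 0))"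
        by (rule member_le_sum) (use that c A0 finH0 in auto)
      also have "\<dots> = 1" using c v0 by simp
      finally show ?thesis .
    qed
    have "finite H" unfolding H_def using finH0 by simp
    moreover have "\<forall>(t, \<phi>)\<in>H. cyc_hom k l t V E \<phi>" unfolding H_def H0_def by auto
    moreover have "\<forall>h\<in>H. 0 \<le> \<omega> h \<and> \<omega> h \<le> 1" unfolding H_def \<omega>_def using c c1 by auto
    moreover have "\<forall>v\<in>V. (\<Sum>(t, \<phi>)\<in>H. \<omega> (t, \<phi>) * real (card {x\<in>{..<cyc_nverts k l t}. \<phi> x = v})) = 1"
    proof
      fix v assume v: "v \<in> V"
      have "(\<Sum>(t, \<phi>)\<in>H. \<omega> (t, \<phi>) * real (card {x\<in>{..<cyc_nverts k l t}. \<phi> x = v}))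
          = (\<Sum>\<phi>\<in>H0. c \<phi> * A \<phi> v)"
        unfolding H_def by (subst sum.reindex) (auto simp: inj_on_def \<omega>_def A_def cycN)
      then show "(\<Sum>(t, \<phi>)\<in>H. \<omega> (t, \<phi>) * real (card {x\<in>{..<cyc_nverts k l t}. \<phi> x = v})) = 1"
        using c v by simp
    qed
    ultimately show ?thesis unfolding perfect_frac_cycle_tiling_def V_def by blast
  next
    assume "\<exists>y. (\<forall>i\<in>H0. 0 \<le> dotp V y (A i)) \<and> dotp V y (\<lambda>_. 1) < 0"
    then obtain y where y: "\<forall>i\<in>H0. 0 \<le> dotp V y (A i)" "dotp V y (\<lambda>_. 1) < 0" by blast
    have Sneg: "(\<Sum>v\<in>V. y v) < 0" using y unfolding dotp_def by simp
    have cardV: "card V = n" unfolding V_def by simp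
    obtain T where T: "T \<subseteq> V" "card T = Tn" "\<forall>x\<in>T. \<forall>z\<in>V-T. y z \<le> y x"
      using top_subset[OF finV, of Tn y] T2 cardV by auto
    define B where "B = V - T"
    have finB: "finite B" unfolding B_def using finV by simp
    have cardB: "card B = n - Tn" unfolding B_def using T finV cardV by (simp add: card_Diff_subset finite_subset)
    have kB: "k-1 \<le> card B" using cardB T2 by linarith
    obtain S0 where S0: "S0 \<subseteq> B" "card S0 = k-1" "\<forall>x\<in>S0. \<forall>z\<in>B-S0. - y z \<le> - y x"
      using top_subset[OF finB kB, of "\<lambda>v. - y v"] by blast
    have finS0: "finite S0" using S0 finB finite_subset by auto
    have S0V: "S0 \<subseteq> V" using S0 B_def by auto
    have edge_eq: "e = insert u S0" if "e \<in> E" "S0 \<subseteq> e" "u \<in> e" "u \<notin> S0" for e u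
    proof -
      have ce: "card e = k" "finite e" using kg that unfolding kgraph_def
        by (auto intro: finite_subset[OF _ finite_lessThan])
      have "insert u S0 \<subseteq> e" using that by auto
      moreover have "card (insert u S0) = k" using S0 finS0 that k3 by simp
      ultimately show ?thesis using ce by (metis card_subset_eq)
    qed
    have "\<exists>e\<in>E. S0 \<subseteq> e \<and> \<not> e \<subseteq> S0 \<union> T"
    proof (rule ccontr)
      assume "\<not> ?thesis"
      then have all: "\<forall>e\<in>E. S0 \<subseteq> e \<longrightarrow> e \<subseteq> S0 \<union> T" by blast
      have "{e\<in>E. S0 \<subseteq> e} \<subseteq> (\<lambda>u. insert u S0) ` T"
      proof
        fix e assume e: "e \<in> {e\<in>E. S0 \<subseteq> e}"
        have "card e = k" using kg e unfolding kgraph_def by auto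
        then have "e \<noteq> S0" using S0 k3 by auto
        then obtain u where "u \<in> e" "u \<notin> S0" using e by auto
        then have "u \<in> T" "e = insert u S0" using all e edge_eq by auto
        then show "e \<in> (\<lambda>u. insert u S0) ` T" by auto
      qed
      then have "card {e\<in>E. S0 \<subseteq> e} \<le> card ((\<lambda>u. insert u S0) ` T)"
        using T finV by (intro card_mono) (auto intro: finite_subset)
      also have "\<dots> \<le> card T" using T finV by (intro card_image_le) (auto intro: finite_subset)
      finally show False using cod[OF S0V[unfolded V_def]] S0 T by simp
    qed
    then obtain e u where e: "e \<in> E" "S0 \<subseteq> e" "u \<in> e" "u \<notin> S0" "u \<notin> T" by blast
    have eu: "e = insert u S0" using edge_eq e by simp
    have uV: "u \<in> V" using kg e unfolding kgraph_def V_def by auto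
    have uB: "u \<in> B - S0" using uV e B_def by auto
    obtain g where g: "bij_betw g {..<k-1} S0"
      using ex_bij_betw_nat_finite[OF finS0] S0 by (auto simp: lessThan_atLeast0)
    define P where "P s = (\<lambda>x. if x < N then Phi K (k-1) u g s x else undefined)" for s
    have PH: "P s \<in> H0" for s
      unfolding H0_def P_def N_def K_def m_def t0_def V_def
      using hom_ok[OF kl a kg _ _ _ g, of u s] e eu S0 by simp
    have "0 \<le> (\<Sum>s<k-1. \<Sum>x<N. y (P s x))"
      by (rule sum_nonneg) (use y PH dotA in auto)
    also have "(\<Sum>s<k-1. \<Sum>x<N. y (P s x)) = (\<Sum>s<k-1. \<Sum>x<K*(k-1). y (Phi K (k-1) u g s x))"
      unfolding P_def N_def by simp
    also have "\<dots> = real (k-1) * real (k-1) * y u + real (K*(k-1) - (k-1)) * (\<Sum>v\<in>S0. y v)"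
      by (rule dual_sum[OF K0 g])
    finally have d0: "0 \<le> real (k-1) * real (k-1) * y u + real (K*(k-1) - (k-1)) * (\<Sum>v\<in>S0. y v)" .
    have "K*(k-1) - (k-1) = (K-1)*(k-1)" by (simp add: diff_mult_distrib)
    then have "real (K*(k-1) - (k-1)) = real (K-1) * real (k-1)" by simp
    then have "real (K*(k-1) - (k-1)) = real (k-1) * (real K - 1)"
      using K0 by (simp add: of_nat_diff mult.commute)
    note eqR = this
    have "0 \<le> real (k-1) * real (k-1) * y u + (real (k-1) * (real K - 1)) * (\<Sum>v\<in>S0. y v)"
      using d0 by (simp only: eqR)
    then have "0 \<le> real (k-1) * (real (k-1) * y u + (real K - 1) * (\<Sum>v\<in>S0. y v))"
      by (simp only: distrib_left mult.assoc)
    then have dual: "0 \<le> real (k-1) * y u + (real K - 1) * (\<Sum>v\<in>S0. y v)"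
      using k3 by (simp add: zero_le_mult_iff)
    have VD: "V = T \<union> (B - S0) \<union> S0" using B_def S0 T by auto
    have Ssplit: "(\<Sum>v\<in>V. y v) = (\<Sum>v\<in>T. y v) + (\<Sum>v\<in>B - S0. y v) + (\<Sum>v\<in>S0. y v)"
    proof -
      have f: "finite T" "finite (B - S0)" using T finV finB by (auto intro: finite_subset)
      have "(\<Sum>v\<in>V. y v) = (\<Sum>v\<in>T \<union> (B - S0). y v) + (\<Sum>v\<in>S0. y v)"
        unfolding VD using f finS0 S0(1) by (intro sum.union_disjoint) (auto simp: B_def)
      also have "(\<Sum>v\<in>T \<union> (B - S0). y v) = (\<Sum>v\<in>T. y v) + (\<Sum>v\<in>B - S0. y v)"
        using f by (intro sum.union_disjoint) (auto simp: B_def)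
      finally show ?thesis .
    qed
    have ST: "(\<Sum>v\<in>T. y v) \<ge> real Tn * y u"
    proof -
      have "(\<Sum>v\<in>T. y u) \<le> (\<Sum>v\<in>T. y v)" using T uV e by (intro sum_mono) auto
      then show ?thesis using T by simp
    qed
    have lowS: "(\<Sum>v\<in>S0. y v) \<le> real (k-1) * y w" if "w \<in> B - S0" for w
    proof -
      have "(\<Sum>v\<in>S0. y v) \<le> (\<Sum>v\<in>S0. y w)" using S0 that by (intro sum_mono) auto
      then show ?thesis using S0 by simp
    qed
    have SR: "real (k-1) * (\<Sum>v\<in>B - S0. y v) \<ge> (real (n - Tn) - real (k-1)) * (\<Sum>v\<in>S0. y v)"
    proof -
      have "(\<Sum>v\<in>B - S0. (\<Sum>v\<in>S0. y v)) \<le> (\<Sum>v\<in>B - S0. real (k-1) * y v)"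
        using lowS by (intro sum_mono) auto
      moreover have "card (B - S0) = n - Tn - (k-1)" using cardB S0 finS0 by (simp add: card_Diff_subset)
      ultimately show ?thesis using T2 by (simp add: sum_distrib_left of_nat_diff diff_diff_eq)
    qed
    have False
    proof (rule final_arith[of "\<Sum>v\<in>V. y v"])
      show "(\<Sum>v\<in>V. y v) < 0" by (rule Sneg)
      show "(\<Sum>v\<in>V. y v) = (\<Sum>v\<in>T. y v) + (\<Sum>v\<in>B - S0. y v) + (\<Sum>v\<in>S0. y v)" by (rule Ssplit)
      show "(\<Sum>v\<in>T. y v) \<ge> real Tn * y u" by (rule ST)
      show "real (k-1) * (\<Sum>v\<in>B - S0. y v) \<ge> (real (n - Tn) - real (k-1)) * (\<Sum>v\<in>S0. y v)" by (rule SR)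
      show "real (k-1) * y u \<ge> (\<Sum>v\<in>S0. y v)" using lowS uB by simp
      show "real (k-1) * y u + (real K - 1) * (\<Sum>v\<in>S0. y v) \<ge> 0" by (rule dual)
      have "real n \<le> real K * real Tn" using T1 K_def m_def by (simp flip: of_nat_mult)
      then show "(real K - 1) * real Tn \<ge> real (n - Tn)" using T2 by (simp add: of_nat_diff algebra_simps)
      show "real (k-1) > 0" "real K > 1" "real Tn \<ge> 0" "real (n - Tn) \<ge> 0" using k3 kK by auto
    qed
    then show ?thesis ..
  qed
qed

theorem corollary3p8:
  fixes k l :: nat
  assumes "1 \<le> l" and "l \<le> k - 2" and "\<not> (k - l) dvd k"
  shows "frct_threshold (k - 1) k l \<le> lambda_kl k l"
proof -
  have kl2: "l + 2 \<le> k" using assms by simp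
  have k3: "3 \<le> k" using assms by simp
  define m where "m = k - l"
  have m2: "2 \<le> m" "m < k" using kl2 assms m_def by auto
  define x where "x = real k / real m"
  have x0: "0 \<le> x" unfolding x_def by simp
  define a where "a = nat \<lceil>x\<rceil>"
  have ra: "real a = of_int \<lceil>x\<rceil>" unfolding a_def using x0 by simp
  have a1: "x \<le> real a" using ra by simp
  have a2: "real a - 1 < x" using ra ceiling_correct[of x] by simp
  have mpos: "0 < real m" using m2 by simp
  have "real k \<le> real a * real m" using a1 mpos unfolding x_def by (simp add: field_simps)
  then have "k \<le> a * m" by (simp flip: of_nat_mult)
  moreover have "a * m \<noteq> k" using assms(3) m_def by (metis dvd_triv_right)
  ultimately have akm: "k < a * m" by simp
  have a0: "a \<ge> 1" using akm by (cases a) auto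
  have "(real a - 1) * real m < real k" using a2 mpos unfolding x_def by (simp add: field_simps)
  then have "real ((a - 1) * m) < real k" using a0 by (simp add: of_nat_diff)
  then have am1: "(a - 1) * m < k" by linarith
  have a2': "2 \<le> a"
  proof (rule ccontr)
    assume "\<not> 2 \<le> a"
    then have "a \<le> 1" by simp
    then have "a * m \<le> 1 * m" by (rule mult_le_mono1)
    then have "a * m \<le> m" by simp
    then show False using akm m2 by linarith
  qed
  have am4: "4 \<le> a * m" using a2' m2 mult_le_mono[of 2 a 2 m] by simp
  define lam where "lam = 1 / (real a * real m)"
  have lamdef: "lambda_kl k l = lam" unfolding lambda_kl_def lam_def m_def[symmetric]
    using ra x_def by simp
  have "real 4 \<le> real (a * m)" using am4 by (simp only: of_nat_le_iff)
  then have amr: "4 \<le> real a * real m" by simp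
  have lam0: "0 \<le> lam" "lam \<le> 1/4" unfolding lam_def
    by simp (rule divide_left_mono, use amr in auto)
  have lamam: "lam * (real a * real m) = 1" unfolding lam_def using a0 m2 by simp
  define X where "X = {\<delta>. 0 \<le> \<delta> \<and> \<delta> \<le> 1 \<and>
     (\<forall>\<epsilon>>0. \<exists>n0. \<forall>n\<ge>n0. \<forall>E :: nat set set.
        kgraph k {..<n} E \<and>
        real (min_deg (k - 1) {..<n} E) \<ge> (\<delta> + \<epsilon>) * real ((n - (k - 1)) choose (k - (k - 1)))
        \<longrightarrow> perfect_frac_cycle_tiling k l {..<n} E)}"
  have "lam \<in> X"
    unfolding X_def
  proof (intro CollectI conjI allI impI)
    show "0 \<le> lam" "lam \<le> 1" using lam0 by auto
    fix \<epsilon> :: real assume ep: "\<epsilon> > 0"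
    define n0 where "n0 = nat \<lceil>real k / \<epsilon>\<rceil> + 2 * k"
    show "\<exists>n0. \<forall>n\<ge>n0. \<forall>E :: nat set set. kgraph k {..<n} E \<and>
        real (min_deg (k - 1) {..<n} E) \<ge> (lam + \<epsilon>) * real ((n - (k - 1)) choose (k - (k - 1)))
        \<longrightarrow> perfect_frac_cycle_tiling k l {..<n} E"
    proof (intro exI[of _ n0] allI impI, elim conjE)
      fix n :: nat and E :: "nat set set"
      assume n: "n0 \<le> n" and kg: "kgraph k {..<n} E"
        and md: "real (min_deg (k - 1) {..<n} E) \<ge> (lam + \<epsilon>) * real ((n - (k - 1)) choose (k - (k - 1)))"
      have n2k: "2 * k \<le> n" using n n0_def by simp
      have "real k / \<epsilon> \<le> real (nat \<lceil>real k / \<epsilon>\<rceil>)" by linarith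
      moreover have "real n0 = real (nat \<lceil>real k / \<epsilon>\<rceil>) + 2 * real k" by (simp add: n0_def)
      moreover have "real n0 \<le> real n" using n by simp
      ultimately have "real k / \<epsilon> + 2 * real k \<le> real n" by linarith
      then have "real k \<le> \<epsilon> * (real n - 2 * real k)" using ep
        by (simp add: field_simps)
      moreover have "\<epsilon> * (real n - real k + 1) = \<epsilon> * (real n - 2 * real k) + \<epsilon> * real k + \<epsilon>"
        by (simp add: algebra_simps)
      moreover have "0 \<le> \<epsilon> * real k" using ep by simp
      ultimately have nk: "real k \<le> \<epsilon> * (real n - real k + 1)" using ep by linarith
      have ch: "(n - (k - 1)) choose (k - (k - 1)) = n - (k - 1)" using k3 by simp
      have rn: "real (n - (k - 1)) = real n - real k + 1" using n2k k3 by (simp add: of_nat_diff)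
      define Tn where "Tn = nat \<lceil>lam * real n\<rceil>"
      have Tn1: "lam * real n \<le> real Tn" unfolding Tn_def using lam0 by linarith
      have Tn2: "real Tn < lam * real n + 1" unfolding Tn_def using lam0 ceiling_correct[of "lam * real n"]
        by (simp add: of_nat_nat)
      have T1: "n \<le> a * (k - l) * Tn"
      proof -
        have "real n = lam * real n * (real a * real m)" using lamam by simp
        also have "\<dots> \<le> real Tn * (real a * real m)" using Tn1 by (intro mult_right_mono) auto
        finally show ?thesis unfolding m_def[symmetric] by (simp flip: of_nat_mult add: mult_ac)
      qed
      have T2: "Tn + (k - 1) \<le> n"
      proof -
        have "lam * real n \<le> real n / 4" using mult_right_mono[OF lam0(2), of "real n"] by simp
        then have "real Tn + real k \<le> real n + 1" using Tn2 n2k by linarith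
        then show ?thesis using k3 by linarith
      qed
      have cod: "Tn < card {e\<in>E. S \<subseteq> e}" if S: "S \<subseteq> {..<n}" "card S = k - 1" for S
      proof -
        have fin: "finite {card {e\<in>E. S \<subseteq> e} |S. S \<subseteq> {..<n} \<and> card S = k - 1}"
        proof -
          have "{card {e\<in>E. S \<subseteq> e} |S. S \<subseteq> {..<n} \<and> card S = k - 1}
                \<subseteq> (\<lambda>S. card {e\<in>E. S \<subseteq> e}) ` Pow {..<n}" by auto
          then show ?thesis by (rule finite_subset) simp
        qed
        have "min_deg (k - 1) {..<n} E \<le> card {e\<in>E. S \<subseteq> e}"
          unfolding min_deg_def using S by (intro Min_le[OF fin]) auto
        then have r1: "real (min_deg (k - 1) {..<n} E) \<le> real (card {e\<in>E. S \<subseteq> e})" by simp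
        have "(lam + \<epsilon>) * (real n - real k + 1) \<le> real (min_deg (k - 1) {..<n} E)"
          using md unfolding ch rn .
        then have "(lam + \<epsilon>) * (real n - real k + 1) \<le> real (card {e\<in>E. S \<subseteq> e})"
          using r1 by linarith
        moreover have "lam * real n + 1 \<le> (lam + \<epsilon>) * (real n - real k + 1)"
        proof -
          have "lam * (real k - 1) \<le> real k - 1" using lam0 k3 by (simp add: mult_left_le_one_le)
          then show ?thesis using nk by (simp add: algebra_simps)
        qed
        ultimately show ?thesis using Tn2 by linarith
      qed
      show "perfect_frac_cycle_tiling k l {..<n} E"
        by (rule tiling_exists[OF assms(1) kl2 _ _ kg T1 T2 cod])
           (use am1 akm m_def in auto)
    qed
  qed
  moreover have "bdd_below X" unfolding X_def by (rule bdd_belowI[of _ 0]) auto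
  ultimately have "Inf X \<le> lam" by (rule cInf_lower)
  then show ?thesis unfolding frct_threshold_def X_def[symmetric] lamdef .
qed

end
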